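(* Assume the PACE setting below. Then \[ \mathbb{E}\,\tilde{\delta}(\hat C, C) \le \frac{T}{\tau n^2}\,\mathbb{E}\|\hat C^{(S)} - C^{(S)}\|_F^2 + \pi_{\max}\,\max_{i,j}\mathbb{P}(N_{ij}<\tau), \] and moreover \[ \mathbb{E}\|\hat C^{(S)} - C^{(S)}\|_F^2 \le n^2\,\mathbb{P}(|S|<m_\star) + 4\,\mathbb{E}\big[|S|^2\,\delta(\hat Z_S, Z_S)\,\mathbf 1\{|S|\ge m_\star\}\big]. \]
   Context: PACE setting. Nodes are $[n]=\{1,\dots,n\}$; $Z\in\{0,1\}^{n\times K}$ is a fixed (true) cluster membership matrix (each row has exactly one $1$), $C=ZZ^\top$, $n_k$ is the number of nodes in cluster $k$, $\pi_k=n_k/n$, $\pi_{\max}=\max_k\pi_k$. Fix integers $m_\star\ge1$, $T\ge1$ and a real $\tau>0$. Random node subsets $S_1,\dots,S_T\subseteq[n]$ are chosen (jointly with a random network) by some sampling scheme. For a subset $S$, $C^{(S)}$ denotes the $n\times n$ matrix with $C^{(S)}_{ij}=C_{ij}$ if $i,j\in S$ and $0$ otherwise. For each $\ell$, $\hat C^{(\ell)}$ is a random $n\times n$ matrix vanishing outside $S_\ell\times S_\ell$: if $|S_\ell|\ge m_\star$ then $\hat C^{(\ell)}$ is the zero-extension of $\hat Z_{S_\ell}\hat Z_{S_\ell}^\top$, where $\hat Z_{S_\ell}\in\{0,1\}^{|S_\ell|\times K}$ is a cluster membership matrix output by some clustering algorithm on the subgraph induced by $S_\ell$; if $|S_\ell|<m_\star$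 then $\hat C^{(\ell)}=0$. It is assumed that the pairs $(S_\ell,\hat C^{(\ell)})$, $\ell=1,\dots,T$, are identically distributed, each with the distribution of a generic pair $(S,\hat C^{(S)})$ (with corresponding $\hat Z_S$). Let $y^{(\ell)}_{ij}=\mathbf 1\{i\in S_\ell, j\in S_\ell\}$, $N_{ij}=\sum_{\ell=1}^T y^{(\ell)}_{ij}$, and define the PACE estimator $\hat C_{ij} = \mathbf 1\{N_{ij}\ge\tau\}\,\frac{\sum_{\ell=1}^T y^{(\ell)}_{ij}\hat C^{(\ell)}_{ij}}{N_{ij}}$ (taken to be $0$ when $N_{ij}<\tau$). $Z_S\in\{0,1\}^{|S|\times K}$ is the submatrix of $Z$ with rows in $S$; $\delta(\hat Z_S,Z_S)=\min_Q \frac{1}{|S|}\|\hat Z_SQ-Z_S\|_0$ over $K\times K$ permutation matrices $Q$ ($\|\cdot\|_0$ counts nonzero entries); $\tilde\delta(\hat C,C)=\frac1{n^2}\|\hat C-C\|_F^2$. Expectations are over all randomness (network and sampling). *)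

theory Defs
  imports "HOL-Probability.Probability"
begin

text \<open>Nodes are {1..n}; clusters are labelled 0..K-1. A cluster membership matrix
  Z in {0,1}^(n x K) with exactly one 1 per row is represented by its label function
  z (row i has its 1 in column z i).\<close>

definition memb :: "(nat \<Rightarrow> nat) \<Rightarrow> nat \<Rightarrow> nat \<Rightarrow> real" where
  "memb z i k = (if z i = k then 1 else 0)"

text \<open>C = Z Z^T.\<close>
definition cmat :: "(nat \<Rightarrow> nat) \<Rightarrow> nat \<Rightarrow> nat \<Rightarrow> real" where
  "cmat z i j = (if z i = z j then 1 else 0)"

definition cmat_S :: "(nat \<Rightarrow> nat) \<Rightarrow> nat set \<Rightarrow> nat \<Rightarrow> nat \<Rightarrow> real" where
  "cmat_S z S i j = (if i \<in> S \<and> j \<in> S then cmat z i j else 0)"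

text \<open>hat C^(S): zero-extension of hat Z_S hat Z_S^T if |S| >= m_star, zero otherwise;
  zh is the label function of the clustering output on S.\<close>
definition chat_S :: "nat \<Rightarrow> nat set \<Rightarrow> (nat \<Rightarrow> nat) \<Rightarrow> nat \<Rightarrow> nat \<Rightarrow> real" where
  "chat_S mstar S zh i j =
     (if card S \<ge> mstar \<and> i \<in> S \<and> j \<in> S then cmat zh i j else 0)"

definition frob2 :: "nat \<Rightarrow> (nat \<Rightarrow> nat \<Rightarrow> real) \<Rightarrow> (nat \<Rightarrow> nat \<Rightarrow> real) \<Rightarrow> real" where
  "frob2 n A B = (\<Sum>i\<in>{1..n}. \<Sum>j\<in>{1..n}. (A i j - B i j)^2)"

definition delta_tilde :: "nat \<Rightarrow> (nat \<Rightarrow> nat \<Rightarrow> real) \<Rightarrow> (nat \<Rightarrow> nat \<Rightarrow> real) \<Rightarrow> real" where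
  "delta_tilde n A B = frob2 n A B / (real n)^2"

definition pmat :: "(nat \<Rightarrow> nat) \<Rightarrow> nat \<Rightarrow> nat \<Rightarrow> real" where
  "pmat \<sigma> l k = (if \<sigma> l = k then 1 else 0)"

definition delta_mis :: "nat \<Rightarrow> nat set \<Rightarrow> (nat \<Rightarrow> nat) \<Rightarrow> (nat \<Rightarrow> nat) \<Rightarrow> real" where
  "delta_mis K S zh z = Min ((\<lambda>\<sigma>. (1 / real (card S)) *
       real (card {(i, k). i \<in> S \<and> k < K \<and>
          (\<Sum>l<K. memb zh i l * pmat \<sigma> l k) \<noteq> memb z i k}))
     ` {\<sigma>. \<sigma> permutes {..<K}})"

definition Ncount :: "nat \<Rightarrow> (nat \<Rightarrow> nat set) \<Rightarrow> nat \<Rightarrow> nat \<Rightarrow> nat" where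
  "Ncount T S i j = card {l \<in> {1..T}. i \<in> S l \<and> j \<in> S l}"

definition pace :: "nat \<Rightarrow> real \<Rightarrow> (nat \<Rightarrow> nat set) \<Rightarrow> (nat \<Rightarrow> nat \<Rightarrow> nat \<Rightarrow> real)
    \<Rightarrow> nat \<Rightarrow> nat \<Rightarrow> real" where
  "pace T \<tau> S Ch i j =
     (if real (Ncount T S i j) \<ge> \<tau> then
        (\<Sum>l\<in>{1..T}. (if i \<in> S l \<and> j \<in> S l then 1 else 0) * Ch l i j)
          / real (Ncount T S i j)
      else 0)"

definition pi_max :: "nat \<Rightarrow> nat \<Rightarrow> (nat \<Rightarrow> nat) \<Rightarrow> real" where
  "pi_max n K z = Max ((\<lambda>k. real (card {i \<in> {1..n}. z i = k}) / real n) ` {..<K})"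

end

theory Submission
  imports Defs
begin


lemma pace_pt:
  fixes S :: "nat \<Rightarrow> nat set" and Ch :: "nat \<Rightarrow> nat \<Rightarrow> nat \<Rightarrow> real"
  assumes tau: "\<tau> > 0" and Ch0: "\<And>l. \<not>(i\<in>S l \<and> j\<in>S l) \<Longrightarrow> Ch l i j = 0"
  shows "(pace T \<tau> S Ch i j - cmat z i j)^2 \<le> (1/\<tau>) * (\<Sum>l\<in>{1..T}. (Ch l i j - cmat_S z (S l) i j)^2)
           + cmat z i j * (if real (Ncount T S i j) < \<tau> then 1 else 0)"
proof -
  define L where "L = {l\<in>{1..T}. i\<in>S l \<and> j\<in>S l}"
  define C where "C = cmat z i j"
  have C01: "C = 0 \<or> C = 1" unfolding C_def cmat_def by auto
  have finL: "finite L" unfolding L_def by auto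
  have NL: "Ncount T S i j = card L" unfolding Ncount_def L_def by simp
  have D0: "0 \<le> (1/\<tau>) * (\<Sum>l\<in>{1..T}. (Ch l i j - cmat_S z (S l) i j)^2)"
    using tau by (intro mult_nonneg_nonneg sum_nonneg) auto
  show ?thesis
  proof (cases "real (card L) \<ge> \<tau>")
    case False
    then have "pace T \<tau> S Ch i j = 0" unfolding pace_def NL by auto
    then show ?thesis using False C01 D0 NL unfolding C_def[symmetric] by auto
  next
    case True
    have Npos: "real (card L) > 0" using True tau by auto
    have num: "(\<Sum>l\<in>{1..T}. (if i \<in> S l \<and> j \<in> S l then 1 else 0) * Ch l i j) = (\<Sum>l\<in>L. Ch l i j)"
      unfolding L_def by (subst sum.inter_filter) (auto intro: sum.cong)
    have p: "pace T \<tau> S Ch i j = (\<Sum>l\<in>L. Ch l i j) / real (card L)"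
      unfolding pace_def NL using True num by simp
    have "pace T \<tau> S Ch i j - C = (\<Sum>l\<in>L. (Ch l i j - C)) / real (card L)"
      unfolding p using Npos by (simp add: sum_subtractf field_simps)
    then have "(pace T \<tau> S Ch i j - C)^2 = (\<Sum>l\<in>L. 1 * (Ch l i j - C))^2 / (real (card L))^2"
      by (simp add: power_divide)
    also have "\<dots> \<le> ((\<Sum>l\<in>L. 1^2) * (\<Sum>l\<in>L. (Ch l i j - C)^2)) / (real (card L))^2"
      by (intro divide_right_mono Cauchy_Schwarz_ineq_sum) auto
    also have "\<dots> = (\<Sum>l\<in>L. (Ch l i j - C)^2) / real (card L)"
      using Npos by (simp add: power2_eq_square)
    also have "\<dots> \<le> (\<Sum>l\<in>L. (Ch l i j - C)^2) / \<tau>"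
      using True tau by (intro divide_left_mono sum_nonneg) auto
    also have "(\<Sum>l\<in>L. (Ch l i j - C)^2) = (\<Sum>l\<in>L. (Ch l i j - cmat_S z (S l) i j)^2)"
      by (intro sum.cong) (auto simp: L_def cmat_S_def C_def)
    also have "\<dots> \<le> (\<Sum>l\<in>{1..T}. (Ch l i j - cmat_S z (S l) i j)^2)"
      by (intro sum_mono2) (auto simp: L_def)
    finally have "(pace T \<tau> S Ch i j - C)^2 \<le> (1/\<tau>) * (\<Sum>l\<in>{1..T}. (Ch l i j - cmat_S z (S l) i j)^2)"
      using tau by (simp add: divide_right_mono)
    then show ?thesis using C01 unfolding C_def by auto
  qed
qed



lemma memb_pmat_sum:
  assumes "zh i < K"
  shows "(\<Sum>l<K. memb zh i l * pmat \<sigma> l k) = (if \<sigma> (zh i) = k then 1 else 0)"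
proof -
  have "(\<Sum>l<K. memb zh i l * pmat \<sigma> l k) = (\<Sum>l<K. if zh i = l then pmat \<sigma> (zh i) k else 0)"
    by (intro sum.cong) (auto simp: memb_def)
  also have "\<dots> = pmat \<sigma> (zh i) k" using assms by simp
  finally show ?thesis by (simp add: pmat_def)
qed

lemma frob_big:
  assumes Ssub: "S \<subseteq> {1..n}" and zh: "zh ` S \<subseteq> {..<K}" and z: "z ` S \<subseteq> {..<K}"
    and card: "card S \<ge> mstar" and ms: "mstar \<ge> 1"
  shows "frob2 n (chat_S mstar S zh) (cmat_S z S) \<le> 4 * (real (card S))^2 * delta_mis K S zh z"
proof -
  have finS: "finite S" using Ssub finite_subset by blast
  have Spos: "real (card S) > 0" using card ms by auto
  define mis where "mis = (\<lambda>\<sigma>. {(i, k). i \<in> S \<and> k < K \<and>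
          (\<Sum>l<K. memb zh i l * pmat \<sigma> l k) \<noteq> memb z i k})"
  define P where "P = {\<sigma>. \<sigma> permutes {..<K}}"
  have finP: "finite P" unfolding P_def by (rule finite_permutations) auto
  have neP: "P \<noteq> {}" unfolding P_def using permutes_id by blast
  have "delta_mis K S zh z \<in> (\<lambda>\<sigma>. (1 / real (card S)) * real (card (mis \<sigma>))) ` P"
    unfolding delta_mis_def mis_def P_def[symmetric] using finP neP by (intro Min_in) auto
  then obtain \<sigma> where sP: "\<sigma> \<in> P" and dl: "delta_mis K S zh z = (1 / real (card S)) * real (card (mis \<sigma>))"
    by blast
  have perm: "\<sigma> permutes {..<K}" using sP P_def by auto
  have injs: "inj \<sigma>" using perm permutes_inj by blast
  define B where "B = {i\<in>S. \<sigma> (zh i) \<noteq> z i}"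
  have finmis: "finite (mis \<sigma>)"
    by (rule finite_subset[of _ "S \<times> {..<K}"]) (auto simp: mis_def finS)
  have cardB: "card B \<le> card (mis \<sigma>)"
  proof (rule card_inj_on_le[of "\<lambda>i. (i, z i)"])
    show "inj_on (\<lambda>i. (i, z i)) B" by (auto simp: inj_on_def)
    show "(\<lambda>i. (i, z i)) ` B \<subseteq> mis \<sigma>"
    proof
      fix x assume "x \<in> (\<lambda>i. (i, z i)) ` B"
      then obtain i where i: "i \<in> B" "x = (i, z i)" by blast
      have "zh i < K" "z i < K" using i zh z B_def by auto
      then show "x \<in> mis \<sigma>" using i memb_pmat_sum[of zh i K \<sigma> "z i"]
        by (auto simp: mis_def B_def memb_def)
    qed
    show "finite (mis \<sigma>)" by (rule finmis)
  qed
  have tm: "(chat_S mstar S zh i j - cmat_S z S i j)^2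
      \<le> of_bool (i \<in> B) * of_bool (j \<in> S) + of_bool (i \<in> S) * of_bool (j \<in> B)" for i j
  proof (cases "i \<in> S \<and> j \<in> S")
    case False then show ?thesis by (auto simp: chat_S_def cmat_S_def)
  next
    case True
    show ?thesis
    proof (cases "i \<in> B \<or> j \<in> B")
      case True
      then show ?thesis using \<open>i \<in> S \<and> j \<in> S\<close> B_def
        by (auto simp: chat_S_def cmat_S_def cmat_def)
    next
      case False
      then have "\<sigma> (zh i) = z i" "\<sigma> (zh j) = z j" using True B_def by auto
      then have "(zh i = zh j) = (z i = z j)" using injs by (metis injD)
      then show ?thesis using True card by (auto simp: chat_S_def cmat_S_def cmat_def)
    qed
  qed
  have "frob2 n (chat_S mstar S zh) (cmat_S z S) \<le>
     (\<Sum>i\<in>{1..n}. \<Sum>j\<in>{1..n}. of_bool (i \<in> B) * of_bool (j \<in> S) + of_bool (i \<in> S) * of_bool (j \<in> B))"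
    unfolding frob2_def by (intro sum_mono tm)
  also have "\<dots> = (\<Sum>i\<in>{1..n}. of_bool (i \<in> B) * (\<Sum>j\<in>{1..n}. of_bool (j \<in> S)) + of_bool (i \<in> S) * (\<Sum>j\<in>{1..n}. of_bool (j \<in> B)))"
    by (simp only: sum.distrib sum_distrib_left)
  also have "\<dots> = (\<Sum>i\<in>{1..n}. of_bool (i \<in> B)) * (\<Sum>j\<in>{1..n}. of_bool (j \<in> S)) + (\<Sum>i\<in>{1..n}. of_bool (i \<in> S)) * (\<Sum>j\<in>{1..n}. of_bool (j \<in> B))"
    by (simp only: sum.distrib sum_distrib_right)
  also have "\<dots> = real (card B) * real (card S) + real (card S) * real (card B)"
  proof -
    have hS: "(\<Sum>j\<in>{1..n}. of_bool (j \<in> S)) = (real (card S))"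
      using Ssub by (simp add: Int_absorb1 inf.absorb2)
    have hB: "(\<Sum>j\<in>{1..n}. of_bool (j \<in> B)) = (real (card B))"
      using Ssub B_def by (simp, metis (no_types, lifting) Collect_mem_eq Int_absorb1 Int_commute mem_Collect_eq subset_iff)
    show ?thesis by (simp only: hS hB)
  qed
  finally have "frob2 n (chat_S mstar S zh) (cmat_S z S) \<le> 2 * real (card B) * real (card S)" by simp
  also have "\<dots> \<le> 4 * real (card (mis \<sigma>)) * real (card S)"
    using cardB by (intro mult_right_mono) auto
  also have "\<dots> = 4 * (real (card S))^2 * delta_mis K S zh z"
    unfolding dl using Spos by (simp add: power2_eq_square field_simps)
  finally show ?thesis .
qed

lemma frob_small:
  assumes "card S < mstar"
  shows "frob2 n (chat_S mstar S zh) (cmat_S z S) \<le> (real n)^2"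
proof -
  have "frob2 n (chat_S mstar S zh) (cmat_S z S) \<le> (\<Sum>i\<in>{1..n}. \<Sum>j\<in>{1..n}. (1::real))"
    unfolding frob2_def using assms by (intro sum_mono) (auto simp: chat_S_def cmat_S_def cmat_def)
  then show ?thesis by (simp add: power2_eq_square)
qed

lemma frob_le:
  "0 \<le> frob2 n (chat_S mstar S zh) (cmat_S z S) \<and> frob2 n (chat_S mstar S zh) (cmat_S z S) \<le> (real n)^2"
proof
  show "0 \<le> frob2 n (chat_S mstar S zh) (cmat_S z S)" unfolding frob2_def by (intro sum_nonneg) auto
  have "frob2 n (chat_S mstar S zh) (cmat_S z S) \<le> (\<Sum>i\<in>{1..n}. \<Sum>j\<in>{1..n}. (1::real))"
    unfolding frob2_def by (intro sum_mono) (auto simp: chat_S_def cmat_S_def cmat_def)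
  then show "frob2 n (chat_S mstar S zh) (cmat_S z S) \<le> (real n)^2" by (simp add: power2_eq_square)
qed

lemma meas_comp_cs:
  "h \<in> measurable M (count_space UNIV) \<Longrightarrow> (\<lambda>\<omega>. g (h \<omega>)) \<in> measurable M (count_space UNIV)"
  "h \<in> measurable M (count_space UNIV) \<Longrightarrow> (\<lambda>\<omega>. r (h \<omega>) :: real) \<in> borel_measurable M"
  by (rule measurable_compose[of h M "count_space UNIV"]; simp)+



lemma delta_bounds:
  assumes "finite A"
  shows "0 \<le> delta_mis K A zh z \<and> delta_mis K A zh z \<le> real K"
proof -
  define mis where "mis = (\<lambda>\<sigma>. {(i, k). i \<in> A \<and> k < K \<and>
          (\<Sum>l<K. memb zh i l * pmat \<sigma> l k) \<noteq> memb z i k})"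
  define P where "P = {\<sigma>. \<sigma> permutes {..<K}}"
  have finP: "finite P" unfolding P_def by (rule finite_permutations) auto
  have idP: "id \<in> P" unfolding P_def using permutes_id by blast
  have d: "delta_mis K A zh z = Min ((\<lambda>\<sigma>. (1 / real (card A)) * real (card (mis \<sigma>))) ` P)"
    unfolding delta_mis_def mis_def P_def by simp
  have "delta_mis K A zh z \<in> (\<lambda>\<sigma>. (1 / real (card A)) * real (card (mis \<sigma>))) ` P"
    unfolding d using finP idP by (intro Min_in) auto
  then have nn: "0 \<le> delta_mis K A zh z" by auto
  have "card (mis id) \<le> card (A \<times> {..<K})"
    by (rule card_mono) (auto simp: mis_def assms)
  then have c: "real (card (mis id)) \<le> real (card A) * real K"
    by (metis card_cartesian_product card_lessThan of_nat_le_iff of_nat_mult)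
  have "delta_mis K A zh z \<le> (1 / real (card A)) * real (card (mis id))"
    unfolding d using finP idP by (intro Min_le) auto
  also have "\<dots> \<le> real K"
  proof (cases "card A = 0")
    case True then show ?thesis by simp
  next
    case False then show ?thesis using c by (simp add: field_simps)
  qed
  finally show ?thesis using nn by simp
qed

lemma part2:
  fixes M :: "'a measure"
  assumes M: "prob_space M"
    and mstar: "mstar \<ge> 1"
    and z: "z ` {1..n} \<subseteq> {..<K}"
    and S0_sub: "\<And>\<omega>. \<omega> \<in> space M \<Longrightarrow> S0 \<omega> \<subseteq> {1..n}"
    and Zh0_lab: "\<And>\<omega>. \<omega> \<in> space M \<Longrightarrow> Zh0 \<omega> ` S0 \<omega> \<subseteq> {..<K}"
    and meas_pair0: "(\<lambda>\<omega>. (S0 \<omega>, chat_S mstar (S0 \<omega>) (Zh0 \<omega>))) \<in> measurable M (count_space UNIV)"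
    and meas_Zh0: "\<And>i. (\<lambda>\<omega>. Zh0 \<omega> i) \<in> measurable M (count_space UNIV)"
  shows "(\<integral>\<omega>. frob2 n (chat_S mstar (S0 \<omega>) (Zh0 \<omega>)) (cmat_S z (S0 \<omega>)) \<partial>M)
         \<le> (real n)^2 * measure M {\<omega> \<in> space M. card (S0 \<omega>) < mstar}
           + 4 * (\<integral>\<omega>. (real (card (S0 \<omega>)))^2 * delta_mis K (S0 \<omega>) (Zh0 \<omega>) z
                        * (if card (S0 \<omega>) \<ge> mstar then 1 else 0) \<partial>M)"
proof -
  interpret prob_space M by (rule M)
  have comp0: "(\<lambda>\<omega>. r (S0 \<omega>) (chat_S mstar (S0 \<omega>) (Zh0 \<omega>)) :: real) \<in> borel_measurable M" for r
    using meas_comp_cs(2)[OF meas_pair0, of "\<lambda>p. r (fst p) (snd p)"] by simp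
  have comp0p: "(\<lambda>\<omega>. r (S0 \<omega>) (chat_S mstar (S0 \<omega>) (Zh0 \<omega>)) :: bool) \<in> measurable M (count_space UNIV)" for r
    using meas_comp_cs(1)[OF meas_pair0, of "\<lambda>p. r (fst p) (snd p)"] by simp
  define X where "X \<omega> = (real (card (S0 \<omega>)))^2 * delta_mis K (S0 \<omega>) (Zh0 \<omega>) z
                        * (if card (S0 \<omega>) \<ge> mstar then 1 else 0)" for \<omega>
  have mdel: "(\<lambda>\<omega>. delta_mis K A (Zh0 \<omega>) z) \<in> borel_measurable M" for A
  proof -
    define Q where "Q = (\<lambda>\<sigma> (i::nat) (k::nat) (v::nat). (\<Sum>l<K. (if v = l then 1 else 0) * pmat \<sigma> l k) \<noteq> memb z i k)"
    have eq: "delta_mis K A (Zh0 \<omega>) z = Min ((\<lambda>\<sigma>. (1/real(card A)) *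
         (\<Sum>p\<in>A\<times>{..<K}. of_bool (Q \<sigma> (fst p) (snd p) (Zh0 \<omega> (fst p))))) ` {\<sigma>. \<sigma> permutes {..<K}})"
      if fA: "finite A" for \<omega>
    proof -
      have "real (card {(i, k). i \<in> A \<and> k < K \<and>
          (\<Sum>l<K. memb (Zh0 \<omega>) i l * pmat \<sigma> l k) \<noteq> memb z i k})
        = (\<Sum>p\<in>A\<times>{..<K}. of_bool (Q \<sigma> (fst p) (snd p) (Zh0 \<omega> (fst p))))" for \<sigma>
      proof -
        have "{(i, k). i \<in> A \<and> k < K \<and> (\<Sum>l<K. memb (Zh0 \<omega>) i l * pmat \<sigma> l k) \<noteq> memb z i k}
            = (A\<times>{..<K}) \<inter> {p. Q \<sigma> (fst p) (snd p) (Zh0 \<omega> (fst p))}"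
          by (auto simp: Q_def memb_def)
        then show ?thesis using fA by simp
      qed
      then show ?thesis unfolding delta_mis_def by simp
    qed
    show ?thesis
    proof (cases "finite A")
      case True
      show ?thesis
        unfolding eq[OF True]
      proof (intro borel_measurable_Min finite_permutations borel_measurable_times borel_measurable_const borel_measurable_sum)
        show "finite {..<K}" by simp
        fix \<sigma> p
        show "(\<lambda>\<omega>. of_bool (Q \<sigma> (fst p) (snd p) (Zh0 \<omega> (fst p))) :: real) \<in> borel_measurable M"
          using meas_comp_cs(2)[OF meas_Zh0[of "fst p"], of "\<lambda>v. of_bool (Q \<sigma> (fst p) (snd p) v)"] by simp
      qed
    next
      case False
      then have "card A = 0" by simp
      then show ?thesis unfolding delta_mis_def by simp
    qed
  qed
  have X_eq: "X \<omega> = (\<Sum>A\<in>Pow {1..n}. of_bool (S0 \<omega> = A) *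
         ((real (card A))^2 * delta_mis K A (Zh0 \<omega>) z * (if card A \<ge> mstar then 1 else 0)))"
    if "\<omega> \<in> space M" for \<omega>
  proof -
    have "S0 \<omega> \<in> Pow {1..n}" using S0_sub[OF that] by auto
    define h where "h A = (real (card A))^2 * delta_mis K A (Zh0 \<omega>) z * (if card A \<ge> mstar then 1 else 0)" for A
    have "(\<Sum>A\<in>Pow {1..n}. of_bool (S0 \<omega> = A) * h A) = (\<Sum>A\<in>Pow {1..n}. if A = S0 \<omega> then h A else 0)"
      by (intro sum.cong) auto
    also have "\<dots> = h (S0 \<omega>)" using \<open>S0 \<omega> \<in> Pow {1..n}\<close> by (simp add: sum.delta)
    finally show ?thesis unfolding X_def h_def by simp
  qed
  have mX: "X \<in> borel_measurable M"
    apply (subst measurable_cong[OF X_eq], assumption)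
    apply (intro borel_measurable_sum borel_measurable_times borel_measurable_const mdel)
    using comp0[of "\<lambda>S C. of_bool (S = _)"] by simp
  have Xb: "norm (X \<omega>) \<le> (real n)^2 * real K" if "\<omega> \<in> space M" for \<omega>
  proof -
    have fin: "finite (S0 \<omega>)" using S0_sub[OF that] finite_subset by blast
    have "card (S0 \<omega>) \<le> card {1..n}" using S0_sub[OF that] by (intro card_mono) auto
    then have c: "(real (card (S0 \<omega>)))^2 \<le> (real n)^2" by (simp add: power_mono)
    have d: "0 \<le> delta_mis K (S0 \<omega>) (Zh0 \<omega>) z" "delta_mis K (S0 \<omega>) (Zh0 \<omega>) z \<le> real K"
      using delta_bounds[OF fin] by auto
    have "0 \<le> X \<omega>" unfolding X_def using d by auto
    moreover have "X \<omega> \<le> (real n)^2 * real K" unfolding X_def using c d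
      by (auto intro!: mult_mono)
    ultimately show ?thesis by simp
  qed
  have iX: "integrable M X"
    by (rule integrable_const_bound[where B="(real n)^2 * real K"]) (use Xb mX in auto)
  define E0 where "E0 = {\<omega> \<in> space M. card (S0 \<omega>) < mstar}"
  have E0s: "E0 \<in> sets M"
  proof -
    have "(\<lambda>\<omega>. card (S0 \<omega>) < mstar) -` {True} \<inter> space M \<in> sets M"
      by (rule measurable_sets[OF comp0p[of "\<lambda>S C. card S < mstar"]]) simp
    moreover have "(\<lambda>\<omega>. card (S0 \<omega>) < mstar) -` {True} \<inter> space M = {\<omega> \<in> space M. card (S0 \<omega>) < mstar}"
      by auto
    ultimately show ?thesis by (simp add: E0_def)
  qed
  have ifr: "integrable M (\<lambda>\<omega>. frob2 n (chat_S mstar (S0 \<omega>) (Zh0 \<omega>)) (cmat_S z (S0 \<omega>)))"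
    by (rule integrable_const_bound[where B="(real n)^2"])
       (use frob_le comp0[of "\<lambda>S C. frob2 n C (cmat_S z S)"] in auto)
  have "(\<integral>\<omega>. frob2 n (chat_S mstar (S0 \<omega>) (Zh0 \<omega>)) (cmat_S z (S0 \<omega>)) \<partial>M)
     \<le> (\<integral>\<omega>. (real n)^2 * indicator E0 \<omega> + 4 * X \<omega> \<partial>M)"
  proof (rule integral_mono)
    show "integrable M (\<lambda>\<omega>. (real n)^2 * indicator E0 \<omega> + 4 * X \<omega>)"
      using E0s iX by (intro Bochner_Integration.integrable_add integrable_mult_right integrable_real_indicator) (auto simp: less_top[symmetric])
    show "integrable M (\<lambda>\<omega>. frob2 n (chat_S mstar (S0 \<omega>) (Zh0 \<omega>)) (cmat_S z (S0 \<omega>)))" by (rule ifr)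
    fix \<omega> assume w: "\<omega> \<in> space M"
    show "frob2 n (chat_S mstar (S0 \<omega>) (Zh0 \<omega>)) (cmat_S z (S0 \<omega>)) \<le> (real n)^2 * indicator E0 \<omega> + 4 * X \<omega>"
    proof (cases "card (S0 \<omega>) < mstar")
      case True
      then show ?thesis using frob_small[OF True] w by (simp add: E0_def X_def)
    next
      case False
      have "z ` S0 \<omega> \<subseteq> {..<K}" using z S0_sub[OF w] by auto
      then have "frob2 n (chat_S mstar (S0 \<omega>) (Zh0 \<omega>)) (cmat_S z (S0 \<omega>)) \<le> 4 * (real (card (S0 \<omega>)))^2 * delta_mis K (S0 \<omega>) (Zh0 \<omega>) z"
        using frob_big[OF S0_sub[OF w] Zh0_lab[OF w] _ _ mstar] False by auto
      then show ?thesis using False w by (simp add: E0_def X_def)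
    qed
  qed
  also have "\<dots> = (real n)^2 * measure M E0 + 4 * integral\<^sup>L M X"
  proof -
    have iI: "integrable M (\<lambda>\<omega>. (real n)^2 * indicator E0 \<omega>)"
      using E0s by (intro integrable_mult_right integrable_real_indicator) (auto simp: less_top[symmetric])
    have "E0 \<inter> space M = E0" using E0s sets.sets_into_space by blast
    then show ?thesis
      by (subst Bochner_Integration.integral_add[OF iI]) (use iX in auto)
  qed
  finally show ?thesis unfolding E0_def X_def .
qed



lemma sum3_swap: "(\<Sum>i\<in>A. \<Sum>j\<in>B. \<Sum>l\<in>C. g l i j) = (\<Sum>l\<in>C. \<Sum>i\<in>A. \<Sum>j\<in>B. g l i j)"
  by (subst sum.swap, rule sum.cong[OF refl], subst sum.swap, rule refl)

lemma part1:
  fixes M :: "'a measure"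
    and n K mstar T :: nat and \<tau> :: real
    and z :: "nat \<Rightarrow> nat"
    and S :: "nat \<Rightarrow> 'a \<Rightarrow> nat set" and Zh :: "nat \<Rightarrow> 'a \<Rightarrow> nat \<Rightarrow> nat"
    and S0 :: "'a \<Rightarrow> nat set" and Zh0 :: "'a \<Rightarrow> nat \<Rightarrow> nat"
  assumes M: "prob_space M"
    and n: "n \<ge> 1" and tau: "\<tau> > 0"
    and z: "z ` {1..n} \<subseteq> {..<K}"
    and meas_pair: "\<And>l. l \<in> {1..T} \<Longrightarrow>
          (\<lambda>\<omega>. (S l \<omega>, chat_S mstar (S l \<omega>) (Zh l \<omega>))) \<in> measurable M (count_space UNIV)"
    and meas_pair0: "(\<lambda>\<omega>. (S0 \<omega>, chat_S mstar (S0 \<omega>) (Zh0 \<omega>))) \<in> measurable M (count_space UNIV)"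
    and ident: "\<And>l. l \<in> {1..T} \<Longrightarrow>
          distr M (count_space UNIV) (\<lambda>\<omega>. (S l \<omega>, chat_S mstar (S l \<omega>) (Zh l \<omega>)))
        = distr M (count_space UNIV) (\<lambda>\<omega>. (S0 \<omega>, chat_S mstar (S0 \<omega>) (Zh0 \<omega>)))"
  shows "(\<integral>\<omega>. delta_tilde n
              (pace T \<tau> (\<lambda>l. S l \<omega>) (\<lambda>l. chat_S mstar (S l \<omega>) (Zh l \<omega>))) (cmat z) \<partial>M)
         \<le> real T / (\<tau> * (real n)^2) *
             (\<integral>\<omega>. frob2 n (chat_S mstar (S0 \<omega>) (Zh0 \<omega>)) (cmat_S z (S0 \<omega>)) \<partial>M)
           + pi_max n K z *
             Max ((\<lambda>(i, j). measure M {\<omega> \<in> space M. real (Ncount T (\<lambda>l. S l \<omega>) i j) < \<tau>})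
                  ` ({1..n} \<times> {1..n}))"
proof -
  interpret prob_space M by (rule M)
  have compl: "(\<lambda>\<omega>. r (S l \<omega>) (chat_S mstar (S l \<omega>) (Zh l \<omega>)) :: real) \<in> borel_measurable M"
    if "l \<in> {1..T}" for r l
    using meas_comp_cs(2)[OF meas_pair[OF that], of "\<lambda>p. r (fst p) (snd p)"] by simp
  have comp0: "(\<lambda>\<omega>. r (S0 \<omega>) (chat_S mstar (S0 \<omega>) (Zh0 \<omega>)) :: real) \<in> borel_measurable M" for r
    using meas_comp_cs(2)[OF meas_pair0, of "\<lambda>p. r (fst p) (snd p)"] by simp
  define fr where "fr = (\<lambda>A C. frob2 n C (cmat_S z A))"
  define I0 where "I0 = (\<integral>\<omega>. frob2 n (chat_S mstar (S0 \<omega>) (Zh0 \<omega>)) (cmat_S z (S0 \<omega>)) \<partial>M)"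
  have ifrl: "integrable M (\<lambda>\<omega>. fr (S l \<omega>) (chat_S mstar (S l \<omega>) (Zh l \<omega>)))" if "l \<in> {1..T}" for l
    by (rule integrable_const_bound[where B="(real n)^2"])
       (use frob_le compl[OF that, of fr] in \<open>auto simp: fr_def\<close>)
  have Il: "(\<integral>\<omega>. fr (S l \<omega>) (chat_S mstar (S l \<omega>) (Zh l \<omega>)) \<partial>M) = I0" if l: "l \<in> {1..T}" for l
  proof -
    have "(\<integral>\<omega>. fr (S l \<omega>) (chat_S mstar (S l \<omega>) (Zh l \<omega>)) \<partial>M)
        = integral\<^sup>L (distr M (count_space UNIV) (\<lambda>\<omega>. (S l \<omega>, chat_S mstar (S l \<omega>) (Zh l \<omega>)))) (\<lambda>p. fr (fst p) (snd p))"
      by (subst integral_distr[OF meas_pair[OF l]]) auto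
    also have "\<dots> = integral\<^sup>L (distr M (count_space UNIV) (\<lambda>\<omega>. (S0 \<omega>, chat_S mstar (S0 \<omega>) (Zh0 \<omega>)))) (\<lambda>p. fr (fst p) (snd p))"
      by (simp add: ident[OF l])
    also have "\<dots> = I0"
      by (subst integral_distr[OF meas_pair0]) (auto simp: I0_def fr_def)
    finally show ?thesis .
  qed
  have I0nn: "0 \<le> I0" unfolding I0_def using frob_le by (intro Bochner_Integration.integral_nonneg) auto
  define Nr where "Nr = (\<lambda>i j \<omega>. real (Ncount T (\<lambda>l. S l \<omega>) i j))"
  have Nr_eq: "Nr i j = (\<lambda>\<omega>. \<Sum>l\<in>{1..T}. of_bool (i \<in> S l \<omega> \<and> j \<in> S l \<omega>))" for i j
  proof
    fix \<omega>
    have "{l \<in> {1..T}. i \<in> S l \<omega> \<and> j \<in> S l \<omega>} = {1..T} \<inter> {l. i \<in> S l \<omega> \<and> j \<in> S l \<omega>}" by auto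
    then show "Nr i j \<omega> = (\<Sum>l\<in>{1..T}. of_bool (i \<in> S l \<omega> \<and> j \<in> S l \<omega>))"
      unfolding Nr_def Ncount_def by simp
  qed
  have mNr: "Nr i j \<in> borel_measurable M" for i j
    unfolding Nr_eq
    by (intro borel_measurable_sum) (use compl[of _ "\<lambda>A C. of_bool (i \<in> A \<and> j \<in> A)"] in simp)
  define E where "E = (\<lambda>i j. {\<omega> \<in> space M. Nr i j \<omega> < \<tau>})"
  have Es: "E i j \<in> sets M" for i j
    unfolding E_def by (rule borel_measurable_less[OF mNr borel_measurable_const])
  define Pm where "Pm = Max ((\<lambda>(i, j). measure M {\<omega> \<in> space M. real (Ncount T (\<lambda>l. S l \<omega>) i j) < \<tau>})
                  ` ({1..n} \<times> {1..n}))"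
  have PmE: "measure M (E i j) \<le> Pm" if "i \<in> {1..n}" "j \<in> {1..n}" for i j
    unfolding Pm_def E_def Nr_def using that by (intro Max_ge) auto
  define F where "F = (\<lambda>\<omega>. delta_tilde n
              (pace T \<tau> (\<lambda>l. S l \<omega>) (\<lambda>l. chat_S mstar (S l \<omega>) (Zh l \<omega>))) (cmat z))"
  define G where "G = (\<lambda>\<omega>. (1 / (\<tau> * (real n)^2)) * (\<Sum>l\<in>{1..T}. fr (S l \<omega>) (chat_S mstar (S l \<omega>) (Zh l \<omega>)))
      + (1 / (real n)^2) * (\<Sum>i\<in>{1..n}. \<Sum>j\<in>{1..n}. cmat z i j * indicator (E i j) \<omega>))"
  have ptFG: "F \<omega> \<le> G \<omega>" if w: "\<omega> \<in> space M" for \<omega>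
  proof -
    have npos: "0 < (real n)^2" using n by simp
    let ?D = "\<lambda>l i j. (chat_S mstar (S l \<omega>) (Zh l \<omega>) i j - cmat_S z (S l \<omega>) i j)^2"
    have "F \<omega> = (\<Sum>i\<in>{1..n}. \<Sum>j\<in>{1..n}. (pace T \<tau> (\<lambda>l. S l \<omega>) (\<lambda>l. chat_S mstar (S l \<omega>) (Zh l \<omega>)) i j - cmat z i j)^2) / (real n)^2"
      unfolding F_def delta_tilde_def frob2_def by simp
    also have "\<dots> \<le> (\<Sum>i\<in>{1..n}. \<Sum>j\<in>{1..n}. (1/\<tau>) * (\<Sum>l\<in>{1..T}. ?D l i j) + cmat z i j * indicator (E i j) \<omega>) / (real n)^2"
    proof (intro divide_right_mono sum_mono)
      fix i j
      have "indicator (E i j) \<omega> = (if real (Ncount T (\<lambda>l. S l \<omega>) i j) < \<tau> then 1 else (0::real))"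
        using w by (simp add: E_def Nr_def indicator_def)
      note eq = this
      show "(pace T \<tau> (\<lambda>l. S l \<omega>) (\<lambda>l. chat_S mstar (S l \<omega>) (Zh l \<omega>)) i j - cmat z i j)^2
          \<le> (1/\<tau>) * (\<Sum>l\<in>{1..T}. ?D l i j) + cmat z i j * indicator (E i j) \<omega>"
      proof -
        have Ch0: "\<And>l. \<not>(i \<in> S l \<omega> \<and> j \<in> S l \<omega>) \<Longrightarrow> chat_S mstar (S l \<omega>) (Zh l \<omega>) i j = 0"
          by (auto simp: chat_S_def)
        show ?thesis unfolding eq
          by (rule pace_pt[where S="\<lambda>l. S l \<omega>" and Ch="\<lambda>l. chat_S mstar (S l \<omega>) (Zh l \<omega>)", OF tau Ch0])
      qed
    qed simp
    also have "\<dots> = (1/\<tau>) * (\<Sum>l\<in>{1..T}. \<Sum>i\<in>{1..n}. \<Sum>j\<in>{1..n}. ?D l i j) / (real n)^2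
        + (\<Sum>i\<in>{1..n}. \<Sum>j\<in>{1..n}. cmat z i j * indicator (E i j) \<omega>) / (real n)^2"
    proof -
      have "(\<Sum>i\<in>{1..n}. \<Sum>j\<in>{1..n}. (1/\<tau>) * (\<Sum>l\<in>{1..T}. ?D l i j) + cmat z i j * indicator (E i j) \<omega>)
         = (1/\<tau>) * (\<Sum>i\<in>{1..n}. \<Sum>j\<in>{1..n}. \<Sum>l\<in>{1..T}. ?D l i j) + (\<Sum>i\<in>{1..n}. \<Sum>j\<in>{1..n}. cmat z i j * indicator (E i j) \<omega>)"
        by (simp only: sum.distrib sum_distrib_left)
      also have "(\<Sum>i\<in>{1..n}. \<Sum>j\<in>{1..n}. \<Sum>l\<in>{1..T}. ?D l i j) = (\<Sum>l\<in>{1..T}. \<Sum>i\<in>{1..n}. \<Sum>j\<in>{1..n}. ?D l i j)"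
        by (rule sum3_swap)
      finally show ?thesis by (simp only: add_divide_distrib)
    qed
    also have "\<dots> = G \<omega>"
      unfolding G_def fr_def frob2_def by simp
    finally show ?thesis .
  qed
  have iInd: "integrable M (\<lambda>\<omega>. cmat z i j * indicator (E i j) \<omega>)" for i j
    using Es by (intro integrable_mult_right integrable_real_indicator) (auto simp: less_top[symmetric])
  have a: "integrable M (\<lambda>\<omega>. (1 / (\<tau> * (real n)^2)) * (\<Sum>l\<in>{1..T}. fr (S l \<omega>) (chat_S mstar (S l \<omega>) (Zh l \<omega>))))"
    using ifrl by (intro integrable_mult_right Bochner_Integration.integrable_sum) auto
  have b: "integrable M (\<lambda>\<omega>. (1 / (real n)^2) * (\<Sum>i\<in>{1..n}. \<Sum>j\<in>{1..n}. cmat z i j * indicator (E i j) \<omega>))"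
    using iInd by (intro integrable_mult_right Bochner_Integration.integrable_sum) auto
  have iG: "integrable M G"
    unfolding G_def by (rule Bochner_Integration.integrable_add[OF a b])
  have Gnn: "0 \<le> G \<omega>" for \<omega>
    unfolding G_def fr_def using frob_le tau
    by (intro add_nonneg_nonneg mult_nonneg_nonneg sum_nonneg) (auto simp: cmat_def)
  have FG: "integral\<^sup>L M F \<le> integral\<^sup>L M G"
  proof (cases "integrable M F")
    case True
    then show ?thesis using iG ptFG by (intro integral_mono) auto
  next
    case False
    then show ?thesis using Gnn by (simp add: not_integrable_integral_eq)
  qed
  have "integral\<^sup>L M G = (1 / (\<tau> * (real n)^2)) * (\<Sum>l\<in>{1..T}. \<integral>\<omega>. fr (S l \<omega>) (chat_S mstar (S l \<omega>) (Zh l \<omega>)) \<partial>M)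
      + (1 / (real n)^2) * (\<Sum>i\<in>{1..n}. \<Sum>j\<in>{1..n}. cmat z i j * measure M (E i j))"
  proof -
    have c: "(\<integral>\<omega>. (\<Sum>i\<in>{1..n}. \<Sum>j\<in>{1..n}. cmat z i j * indicator (E i j) \<omega>) \<partial>M)
        = (\<Sum>i\<in>{1..n}. \<Sum>j\<in>{1..n}. cmat z i j * measure M (E i j))"
    proof -
      have "E i j \<inter> space M = E i j" for i j using Es sets.sets_into_space by blast
      note EE = this
      have "(\<integral>\<omega>. (\<Sum>i\<in>{1..n}. \<Sum>j\<in>{1..n}. cmat z i j * indicator (E i j) \<omega>) \<partial>M)
         = (\<Sum>i\<in>{1..n}. \<integral>\<omega>. (\<Sum>j\<in>{1..n}. cmat z i j * indicator (E i j) \<omega>) \<partial>M)"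
        by (rule Bochner_Integration.integral_sum) (intro Bochner_Integration.integrable_sum iInd)
      also have "\<dots> = (\<Sum>i\<in>{1..n}. \<Sum>j\<in>{1..n}. \<integral>\<omega>. cmat z i j * indicator (E i j) \<omega> \<partial>M)"
        by (intro sum.cong refl Bochner_Integration.integral_sum iInd)
      also have "\<dots> = (\<Sum>i\<in>{1..n}. \<Sum>j\<in>{1..n}. cmat z i j * measure M (E i j))"
        by (intro sum.cong refl) (simp only: integral_mult_right_zero Bochner_Integration.integral_indicator EE)
      finally show ?thesis .
    qed
    show ?thesis unfolding G_def
      apply (subst Bochner_Integration.integral_add[OF a b])
      apply (simp only: integral_mult_right_zero c)
      apply (subst Bochner_Integration.integral_sum)
      using ifrl by auto
  qed
  also have "\<dots> = (1 / (\<tau> * (real n)^2)) * (real T * I0)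
      + (1 / (real n)^2) * (\<Sum>i\<in>{1..n}. \<Sum>j\<in>{1..n}. cmat z i j * measure M (E i j))"
    using Il by simp
  also have "\<dots> \<le> real T / (\<tau> * (real n)^2) * I0 + pi_max n K z * Pm"
  proof -
    have s1: "(\<Sum>i\<in>{1..n}. \<Sum>j\<in>{1..n}. cmat z i j * measure M (E i j))
        \<le> (\<Sum>i\<in>{1..n}. \<Sum>j\<in>{1..n}. cmat z i j) * Pm"
      unfolding sum_distrib_right
      by (intro sum_mono mult_left_mono PmE) (auto simp: cmat_def)
    have row: "(\<Sum>j\<in>{1..n}. cmat z i j) \<le> real n * pi_max n K z" if i: "i \<in> {1..n}" for i
    proof -
      have zi: "z i \<in> {..<K}" using z i by blast
      have "{1..n} \<inter> {j. z i = z j} = {j \<in> {1..n}. z j = z i}" by auto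
      then have "(\<Sum>j\<in>{1..n}. cmat z i j) = real (card {j \<in> {1..n}. z j = z i})"
        unfolding cmat_def by (simp add: of_bool_def[symmetric])
      also have "\<dots> = real n * (real (card {j \<in> {1..n}. z j = z i}) / real n)" using n by simp
      also have "\<dots> \<le> real n * pi_max n K z"
        unfolding pi_max_def using zi by (intro mult_left_mono Max_ge) (auto intro!: image_eqI[where x="z i"])
      finally show ?thesis .
    qed
    have s2: "(\<Sum>i\<in>{1..n}. \<Sum>j\<in>{1..n}. cmat z i j) \<le> (real n)^2 * pi_max n K z"
    proof -
      have "(\<Sum>i\<in>{1..n}. \<Sum>j\<in>{1..n}. cmat z i j) \<le> (\<Sum>i\<in>{1..n}. real n * pi_max n K z)"
        using row by (intro sum_mono) auto
      then show ?thesis by (simp add: power2_eq_square)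
    qed
    have Pmnn: "0 \<le> Pm"
      using PmE[of 1 1] n by (meson measure_nonneg order_trans atLeastAtMost_iff order_refl)
    have "(1 / (real n)^2) * (\<Sum>i\<in>{1..n}. \<Sum>j\<in>{1..n}. cmat z i j * measure M (E i j))
        \<le> (1 / (real n)^2) * ((real n)^2 * pi_max n K z * Pm)"
      using s1 s2 Pmnn by (intro mult_left_mono) (auto intro: order_trans mult_right_mono)
    also have "\<dots> = pi_max n K z * Pm" using n by simp
    finally show ?thesis by simp
  qed
  finally show ?thesis using FG unfolding F_def I0_def Pm_def by simp
qed


theorem mainTheorem2:
  fixes M :: "'a measure"
    and n K mstar T :: nat and \<tau> :: real
    and z :: "nat \<Rightarrow> nat"
    and S :: "nat \<Rightarrow> 'a \<Rightarrow> nat set" and Zh :: "nat \<Rightarrow> 'a \<Rightarrow> nat \<Rightarrow> nat"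
    and S0 :: "'a \<Rightarrow> nat set" and Zh0 :: "'a \<Rightarrow> nat \<Rightarrow> nat"
  assumes M: "prob_space M"
    and n: "n \<ge> 1" and mstar: "mstar \<ge> 1" and T: "T \<ge> 1" and tau: "\<tau> > 0"
    and z: "z ` {1..n} \<subseteq> {..<K}"
    and S_sub: "\<And>l \<omega>. l \<in> {1..T} \<Longrightarrow> \<omega> \<in> space M \<Longrightarrow> S l \<omega> \<subseteq> {1..n}"
    and Zh_lab: "\<And>l \<omega>. l \<in> {1..T} \<Longrightarrow> \<omega> \<in> space M \<Longrightarrow> Zh l \<omega> ` S l \<omega> \<subseteq> {..<K}"
    and S0_sub: "\<And>\<omega>. \<omega> \<in> space M \<Longrightarrow> S0 \<omega> \<subseteq> {1..n}"
    and Zh0_lab: "\<And>\<omega>. \<omega> \<in> space M \<Longrightarrow> Zh0 \<omega> ` S0 \<omega> \<subseteq> {..<K}"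
    and meas_pair: "\<And>l. l \<in> {1..T} \<Longrightarrow>
          (\<lambda>\<omega>. (S l \<omega>, chat_S mstar (S l \<omega>) (Zh l \<omega>))) \<in> measurable M (count_space UNIV)"
    and meas_pair0: "(\<lambda>\<omega>. (S0 \<omega>, chat_S mstar (S0 \<omega>) (Zh0 \<omega>))) \<in> measurable M (count_space UNIV)"
    and meas_Zh0: "\<And>i. (\<lambda>\<omega>. Zh0 \<omega> i) \<in> measurable M (count_space UNIV)"
    and ident: "\<And>l. l \<in> {1..T} \<Longrightarrow>
          distr M (count_space UNIV) (\<lambda>\<omega>. (S l \<omega>, chat_S mstar (S l \<omega>) (Zh l \<omega>)))
        = distr M (count_space UNIV) (\<lambda>\<omega>. (S0 \<omega>, chat_S mstar (S0 \<omega>) (Zh0 \<omega>)))"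
  shows "(\<integral>\<omega>. delta_tilde n
              (pace T \<tau> (\<lambda>l. S l \<omega>) (\<lambda>l. chat_S mstar (S l \<omega>) (Zh l \<omega>))) (cmat z) \<partial>M)
         \<le> real T / (\<tau> * (real n)^2) *
             (\<integral>\<omega>. frob2 n (chat_S mstar (S0 \<omega>) (Zh0 \<omega>)) (cmat_S z (S0 \<omega>)) \<partial>M)
           + pi_max n K z *
             Max ((\<lambda>(i, j). measure M {\<omega> \<in> space M. real (Ncount T (\<lambda>l. S l \<omega>) i j) < \<tau>})
                  ` ({1..n} \<times> {1..n}))
       \<and> (\<integral>\<omega>. frob2 n (chat_S mstar (S0 \<omega>) (Zh0 \<omega>)) (cmat_S z (S0 \<omega>)) \<partial>M)
         \<le> (real n)^2 * measure M {\<omega> \<in> space M. card (S0 \<omega>) < mstar}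
           + 4 * (\<integral>\<omega>. (real (card (S0 \<omega>)))^2 * delta_mis K (S0 \<omega>) (Zh0 \<omega>) z
                        * (if card (S0 \<omega>) \<ge> mstar then 1 else 0) \<partial>M)"
proof
  show "(\<integral>\<omega>. delta_tilde n
              (pace T \<tau> (\<lambda>l. S l \<omega>) (\<lambda>l. chat_S mstar (S l \<omega>) (Zh l \<omega>))) (cmat z) \<partial>M)
         \<le> real T / (\<tau> * (real n)^2) *
             (\<integral>\<omega>. frob2 n (chat_S mstar (S0 \<omega>) (Zh0 \<omega>)) (cmat_S z (S0 \<omega>)) \<partial>M)
           + pi_max n K z *
             Max ((\<lambda>(i, j). measure M {\<omega> \<in> space M. real (Ncount T (\<lambda>l. S l \<omega>) i j) < \<tau>})
                  ` ({1..n} \<times> {1..n}))"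
    by (rule part1[OF M n tau z meas_pair meas_pair0 ident])
  show "(\<integral>\<omega>. frob2 n (chat_S mstar (S0 \<omega>) (Zh0 \<omega>)) (cmat_S z (S0 \<omega>)) \<partial>M)
         \<le> (real n)^2 * measure M {\<omega> \<in> space M. card (S0 \<omega>) < mstar}
           + 4 * (\<integral>\<omega>. (real (card (S0 \<omega>)))^2 * delta_mis K (S0 \<omega>) (Zh0 \<omega>) z
                        * (if card (S0 \<omega>) \<ge> mstar then 1 else 0) \<partial>M)"
    by (rule part2[OF M mstar z S0_sub Zh0_lab meas_pair0 meas_Zh0])
qed

end
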